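(* Let $r\ge1$ and $D\ge3$ be integers, let $N:=\lfloor \frac{(D-1)r}{2}\rfloor$, $k:=\lfloor\frac{D-1}{2}\rfloor$, $\bar k:=\lceil\frac{D-1}{2}\rceil$. Let $\alpha_1<\cdots<\alpha_{r(D-1)}$ be integers with $\alpha_1\ge2$ such that $\alpha_t$ is odd for $1\le t\le N$ and $\alpha_t$ is even for $N+1\le t\le r(D-1)$. Then there is a nonzero constant $C$ such that $\tilde\Delta_{r,D}(\underline{\alpha})=C\,\tilde\Delta'_{r,D}(\underline{\alpha})\,\tilde\Delta''_{r,D}(\underline{\alpha})$. In particular, if $\tilde\Delta'_{r,D}(\underline{\alpha})\ne0$ and $\tilde\Delta''_{r,D}(\underline{\alpha})\ne0$, then $\tilde\Delta_{r,D}(\underline{\alpha})\ne0$.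
   Context: $B_n(x)$ is the Bernoulli polynomial, $\frac{ze^{xz}}{e^z-1}=\sum_{n\ge0}B_n(x)\frac{z^n}{n!}$, $B_n=B_n(0)$, and $\tilde B_n(x):=D^n(B_n(x)-B_n)$. $\tilde\Delta_{r,D}(\underline{\alpha})$ is the determinant of the $r(D-1)\times r(D-1)$ matrix whose entry in row $t$ ($1\le t\le r(D-1)$) and column $m(D-1)+v$ ($0\le m\le r-1$, $1\le v\le D-1$) is $\frac{\tilde B_{\alpha_t+m}(v/D)}{\alpha_t+m}$. $\tilde\Delta'_{r,D}(\underline{\alpha})$ is the determinant of the $N\times N$ matrix with rows indexed by $t=1,\ldots,N$ and columns indexed by the pairs $(m,v)$ with $0\le m\le r-1$ and $1\le v\le k$ if $m$ is even, $1\le v\le\bar k$ if $m$ is odd (ordered by $m$, then by $v$), with entry $\frac{\tilde B_{\alpha_t+m}(v/D)}{\alpha_t+m}$. $\tilde\Delta''_{r,D}(\underline{\alpha})$ is the determinant of the square matrix with rows indexed by $t=N+1,\ldots,r(D-1)$ and columns indexed by the pairs $(m,v)$ with $0\le m\le r-1$ and $1\le v\le\bar k$ if $m$ is even, $1\le v\le k$ if $m$ is odd (ordered by $m$, then by $v$), with entry $\frac{\tilde B_{\alpha_t+m}(v/D)}{\alpha_t+m}$. *)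

theory Defs
  imports "HOL-Computational_Algebra.Formal_Power_Series" "Jordan_Normal_Form.Determinant"
begin

definition bernoulli_gf :: "real \<Rightarrow> real fps" where
  "bernoulli_gf x = fps_X * fps_exp x / (fps_exp 1 - 1)"

definition bernpoly :: "nat \<Rightarrow> real \<Rightarrow> real" where
  "bernpoly n x = fact n * fps_nth (bernoulli_gf x) n"

definition bern_tilde :: "nat \<Rightarrow> nat \<Rightarrow> real \<Rightarrow> real" where
  "bern_tilde D n x = real D ^ n * (bernpoly n x - bernpoly n 0)"

definition delta_entry :: "nat \<Rightarrow> int \<Rightarrow> nat \<Rightarrow> nat \<Rightarrow> real" where
  "delta_entry D a m v =
     bern_tilde D (nat (a + int m)) (real v / real D) / real_of_int (a + int m)"

definition Delta_full :: "nat \<Rightarrow> nat \<Rightarrow> (nat \<Rightarrow> int) \<Rightarrow> real" where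
  "Delta_full r D \<alpha> =
     det (mat (r * (D - 1)) (r * (D - 1))
       (\<lambda>(i, j). delta_entry D (\<alpha> (i + 1)) (j div (D - 1)) (j mod (D - 1) + 1)))"

definition col_pairs :: "nat \<Rightarrow> nat \<Rightarrow> nat \<Rightarrow> (nat \<times> nat) list" where
  "col_pairs r a b = concat (map (\<lambda>m. map (\<lambda>v. (m, v)) [1..<(if even m then a else b) + 1]) [0..<r])"

definition kk :: "nat \<Rightarrow> nat" where "kk D = (D - 1) div 2"
definition kbar :: "nat \<Rightarrow> nat" where "kbar D = (D - 1 + 1) div 2"
definition NN :: "nat \<Rightarrow> nat \<Rightarrow> nat" where "NN r D = ((D - 1) * r) div 2"

definition Delta' :: "nat \<Rightarrow> nat \<Rightarrow> (nat \<Rightarrow> int) \<Rightarrow> real" where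
  "Delta' r D \<alpha> =
     (let cs = col_pairs r (kk D) (kbar D); n = NN r D in
      det (mat n n (\<lambda>(i, j). delta_entry D (\<alpha> (i + 1)) (fst (cs ! j)) (snd (cs ! j)))))"

definition Delta'' :: "nat \<Rightarrow> nat \<Rightarrow> (nat \<Rightarrow> int) \<Rightarrow> real" where
  "Delta'' r D \<alpha> =
     (let cs = col_pairs r (kbar D) (kk D); n = r * (D - 1) - NN r D in
      det (mat n n (\<lambda>(i, j). delta_entry D (\<alpha> (NN r D + i + 1)) (fst (cs ! j)) (snd (cs ! j)))))"

end

theory Submission
  imports Defs
begin


no_notation vec_index (infixl \<open>$\<close> 100)
notation fps_nth (infixl \<open>$\<close> 75)

definition fpsR :: "real fps \<Rightarrow> real fps" where
  "fpsR f = Abs_fps (\<lambda>n. (-1)^n * f $ n)"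

lemma fpsR_nth[simp]: "fpsR f $ n = (-1)^n * f $ n"
  by (simp add: fpsR_def)

lemma fpsR_mult: "fpsR (f * g) = fpsR f * fpsR g"
proof (rule fps_ext)
  fix n
  have "(fpsR f * fpsR g) $ n = (\<Sum>i=0..n. (-1)^i * f$i * ((-1)^(n-i) * g$(n-i)))"
    by (simp add: fps_mult_nth mult.assoc)
  also have "\<dots> = (\<Sum>i=0..n. (-1)^n * (f$i * g$(n-i)))"
  proof (rule sum.cong)
    fix i assume "i \<in> {0..n}"
    then have "(-1::real)^i * (-1)^(n-i) = (-1)^n" by (simp flip: power_add)
    then show "(-1)^i * f$i * ((-1)^(n-i) * g$(n-i)) = (-1::real)^n * (f$i * g$(n-i))"
      by (metis (no_types, lifting) mult.assoc mult.left_commute)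
  qed simp
  finally show "fpsR (f * g) $ n = (fpsR f * fpsR g) $ n"
    by (simp add: fps_mult_nth sum_distrib_left)
qed

lemma fpsR_diff: "fpsR (f - g) = fpsR f - fpsR g"
  by (rule fps_ext) (simp add: algebra_simps)

lemma fpsR_exp: "fpsR (fps_exp c) = fps_exp (-c)"
  by (rule fps_ext) (simp add: power_mult_distrib[symmetric])

lemma fpsR_one: "fpsR 1 = 1"
  by (rule fps_ext) (simp add: fps_one_nth)

lemma fpsR_X: "fpsR fps_X = - fps_X"
  by (rule fps_ext) (simp add: fps_X_def)

lemma E_ne: "fps_exp (1::real) - 1 \<noteq> 0"
proof
  assume "fps_exp (1::real) - 1 = 0"
  then have "(fps_exp (1::real) - 1) $ 1 = 0" by simp
  then show False by simp
qed

lemma gf_eq: "bernoulli_gf x * (fps_exp 1 - 1) = fps_X * fps_exp x"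
proof -
  have sE: "subdegree (fps_exp (1::real) - 1) \<le> 1"
    by (rule subdegree_leI) simp
  have ne1: "fps_exp x \<noteq> 0"
  proof
    assume "fps_exp x = 0"
    then have "fps_exp x $ 0 = 0" by simp
    then show False by simp
  qed
  have ne: "fps_X * fps_exp x \<noteq> 0" using ne1 by simp
  have "subdegree (fps_X * fps_exp x) = 1"
    by (simp add: subdegree_eq_0_iff)
  with sE have "(fps_exp 1 - 1) dvd fps_X * fps_exp x"
    using fps_dvd_iff[OF E_ne ne] by simp
  then show ?thesis unfolding bernoulli_gf_def by (simp add: dvd_div_mult_self)
qed

lemma gf_unique:
  assumes "G * (fps_exp 1 - 1) = fps_X * fps_exp x"
  shows "G = bernoulli_gf x"
  using assms gf_eq[of x] E_ne by (metis mult_right_cancel)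

lemma gf_refl: "fpsR (bernoulli_gf x) = bernoulli_gf (1 - x)"
proof (rule gf_unique)
  have "fpsR (bernoulli_gf x * (fps_exp 1 - 1)) = fpsR (fps_X * fps_exp x)"
    using gf_eq by simp
  then have h: "fpsR (bernoulli_gf x) * (fps_exp (-1) - 1) = - fps_X * fps_exp (-x)"
    by (simp add: fpsR_mult fpsR_diff fpsR_exp fpsR_one fpsR_X)
  have "fpsR (bernoulli_gf x) * (fps_exp 1 - 1)
      = - (fpsR (bernoulli_gf x) * (fps_exp (-1) - 1)) * fps_exp 1"
    by (simp add: algebra_simps flip: fps_exp_add_mult)
  also have "\<dots> = fps_X * (fps_exp (-x) * fps_exp 1)" using h by simp
  also have "\<dots> = fps_X * fps_exp (1 - x)" by (simp flip: fps_exp_add_mult)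
  finally show "fpsR (bernoulli_gf x) * (fps_exp 1 - 1) = fps_X * fps_exp (1 - x)" .
qed

lemma bernpoly_refl: "bernpoly n (1 - x) = (-1)^n * bernpoly n x"
proof -
  have "bernoulli_gf (1 - x) $ n = (-1)^n * bernoulli_gf x $ n"
    using gf_refl[of x] by (metis fpsR_nth)
  then show ?thesis by (simp add: bernpoly_def)
qed

lemma gf_1_0: "bernoulli_gf 1 = bernoulli_gf 0 + fps_X"
proof (rule gf_unique[symmetric])
  show "(bernoulli_gf 0 + fps_X) * (fps_exp 1 - 1) = fps_X * fps_exp 1"
  proof -
    have "bernoulli_gf 0 * (fps_exp 1 - 1) = fps_X" using gf_eq[of 0] by simp
    then show ?thesis by (simp add: distrib_right algebra_simps)
  qed
qed

lemma bernpoly_1: "n \<noteq> 1 \<Longrightarrow> bernpoly n 1 = bernpoly n 0"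
  by (simp add: bernpoly_def gf_1_0 fps_X_def)

lemma bernpoly_odd0: "odd n \<Longrightarrow> n \<noteq> 1 \<Longrightarrow> bernpoly n 0 = 0"
  using bernpoly_refl[of n 0] bernpoly_1[of n] by simp


no_notation fps_nth (infixl \<open>$\<close> 75)
notation vec_index (infixl \<open>$\<close> 100)


lemma col_pairs_Suc: "col_pairs (Suc r) a b = col_pairs r a b @ map (\<lambda>v. (r,v)) [1..<(if even r then a else b)+1]"
  by (simp add: col_pairs_def)

lemma set_col_pairs: "set (col_pairs r a b) = {(m,v). m<r \<and> 1\<le>v \<and> v \<le> (if even m then a else b)}"
proof
  show "set (col_pairs r a b) \<subseteq> {(m,v). m<r \<and> 1\<le>v \<and> v \<le> (if even m then a else b)}"
    unfolding col_pairs_def by (auto split: if_splits)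
  show "{(m,v). m<r \<and> 1\<le>v \<and> v \<le> (if even m then a else b)} \<subseteq> set (col_pairs r a b)"
  proof clarify
    fix m v assume "m < r" "1 \<le> v" "v \<le> (if even m then a else b)"
    then show "(m, v) \<in> set (col_pairs r a b)"
      unfolding col_pairs_def by (auto simp: image_iff intro!: bexI[of _ m])
  qed
qed

lemma distinct_col_pairs: "distinct (col_pairs r a b)"
proof (induction r)
  case 0 then show ?case by (simp add: col_pairs_def)
next
  case (Suc r)
  then show ?case by (auto simp: col_pairs_Suc set_col_pairs distinct_map inj_on_def)
qed

lemma length_col_pairs: "length (col_pairs r a b) = ((r+1) div 2)*a + (r div 2)*b"
proof (induction r)
  case 0 then show ?case by (simp add: col_pairs_def)
next
  case (Suc r)
  show ?case
  proof (cases "even r")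
    case True then obtain s where "r = 2*s" by (auto elim: evenE)
    then show ?thesis using Suc by (simp add: col_pairs_Suc)
  next
    case False then obtain s where "r = 2*s+1" by (auto elim: oddE)
    then show ?thesis using Suc by (simp add: col_pairs_Suc)
  qed
qed

lemma len_arith:
  assumes "D \<ge> 3"
  shows "((r+1) div 2)*kk D + (r div 2)*kbar D = NN r D \<and>
         ((r+1) div 2)*kbar D + (r div 2)*kk D = r*(D-1) - NN r D"
proof -
  define s where "s = r div 2"
  have rs: "r = 2*s \<or> r = 2*s+1" unfolding s_def by presburger
  define d where "d = (D - 1) div 2"
  have dd: "D = 2*d+1 \<or> D = 2*d+2" unfolding d_def using assms by presburger
  show ?thesis
  proof (cases "D = 2*d+1")
    case True
    then have k: "kk D = d" "kbar D = d" "D - 1 = 2*d" by (simp_all add: kk_def kbar_def)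
    have nn: "NN r D = r * d" unfolding NN_def k by simp
    show ?thesis using rs unfolding k nn
      by (elim disjE) (simp_all add: algebra_simps)
  next
    case False
    then have D: "D = 2*d+2" using dd by simp
    then have k: "kk D = d" "kbar D = d+1" "D - 1 = 2*d+1" by (simp_all add: kk_def kbar_def)
    show ?thesis
    proof (cases "r = 2*s")
      case True
      have nn: "NN r D = s*(2*d+1)" unfolding NN_def k True by simp
      show ?thesis using nn unfolding k True by (simp add: algebra_simps)
    next
      case False
      then have r: "r = 2*s+1" using rs by simp
      have "(2*d+1)*(2*s+1) = 2*(2*d*s+d+s) + 1" by (simp add: algebra_simps)
      then have nn: "NN r D = 2*d*s+d+s" unfolding NN_def k r by simp
      show ?thesis using nn unfolding k r by (simp add: algebra_simps)
    qed
  qed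
qed



lemma entry_sym:
  assumes "a + int m \<ge> 2" "v \<le> D" "D > 0"
  shows "delta_entry D a m (D - v) = (if even (a + int m) then 1 else -1) * delta_entry D a m v"
proof -
  define n where "n = nat (a + int m)"
  have an: "a + int m = int n" using assms n_def by simp
  have n2: "n \<ge> 2" using assms an by simp
  have x: "real (D - v) / real D = 1 - real v / real D" using assms by (simp add: of_nat_diff field_simps)
  have ev: "even (a + int m) \<longleftrightarrow> even n" using an by simp
  show ?thesis
  proof (cases "even n")
    case True then show ?thesis unfolding delta_entry_def bern_tilde_def an x ev
      by (simp add: bernpoly_refl)
  next
    case False
    then have "bernpoly n 0 = 0" using n2 bernpoly_odd0 by simp
    then show ?thesis using False unfolding delta_entry_def bern_tilde_def an x ev
      by (simp add: bernpoly_refl)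
  qed
qed

definition tau :: "nat \<Rightarrow> nat \<times> nat \<Rightarrow> bool \<Rightarrow> nat \<times> nat \<Rightarrow> real" where
  "tau D p s q = (if p = q then 1 else 0) +
     (if p = (fst q, D - snd q) \<and> snd q \<noteq> D - snd q then (if s then 1 else -1) else 0)"

lemma arith_facts:
  assumes "D \<ge> 3" "1 \<le> v" "v \<le> D - 1"
  shows "v = D - v \<Longrightarrow> v \<le> kbar D"
    and "v \<noteq> D - v \<Longrightarrow> (v \<le> kbar D) \<noteq> (D - v \<le> kbar D)"
    and "v \<noteq> D - v \<Longrightarrow> (v \<le> kk D) \<noteq> (D - v \<le> kk D)"
    and "v = D - v \<Longrightarrow> \<not> v \<le> kk D"
    and "v \<le> kk D \<Longrightarrow> v \<noteq> D - v"
    and "kk D \<le> kbar D" and "kbar D \<le> D - 1"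
    and "\<not> v \<le> kk D \<Longrightarrow> \<not> D - v \<le> kk D \<Longrightarrow> v = D - v"
proof -
  define d where "d = (D - 1) div 2"
  have dd: "D = 2*d+1 \<or> D = 2*d+2" unfolding d_def using assms(1) by presburger
  have k: "kk D = d" unfolding kk_def d_def ..
  have kb: "kbar D = (if D = 2*d+1 then d else d+1)" using dd unfolding kbar_def by auto
  show "v = D - v \<Longrightarrow> v \<le> kbar D"
    and "v \<noteq> D - v \<Longrightarrow> (v \<le> kbar D) \<noteq> (D - v \<le> kbar D)"
    and "v \<noteq> D - v \<Longrightarrow> (v \<le> kk D) \<noteq> (D - v \<le> kk D)"
    and "v = D - v \<Longrightarrow> \<not> v \<le> kk D"
    and "v \<le> kk D \<Longrightarrow> v \<noteq> D - v"
    and "kk D \<le> kbar D" and "kbar D \<le> D - 1"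
    and "\<not> v \<le> kk D \<Longrightarrow> \<not> D - v \<le> kk D \<Longrightarrow> v = D - v"
    unfolding k kb using dd assms by auto
qed

lemma core:
  assumes D: "D \<ge> 3" and dist: "distinct cs"
   and setcs: "set cs = {(m,v). m<r \<and> 1\<le>v \<and> v \<le> (if even m then a else b)}"
   and m: "m < r" and v: "1 \<le> v" "v \<le> D - 1"
   and bnd: "(if even m then a else b) = (if sf m then kbar D else kk D)"
   and symF: "Fx (m, D - v) = (if sf m then 1 else -1) * Fx (m, v)"
  shows "(\<Sum>i<length cs. Fx (cs!i) * tau D (cs!i) (sf (fst (cs!i))) (m,v)) = Fx (m,v)"
proof -
  have "(\<Sum>i<length cs. Fx (cs!i) * tau D (cs!i) (sf (fst (cs!i))) (m,v))
      = (\<Sum>p\<in>set cs. Fx p * tau D p (sf (fst p)) (m,v))"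
    using sum.reindex_bij_betw[OF bij_betw_nth[OF dist refl refl], of "\<lambda>p. Fx p * tau D p (sf (fst p)) (m,v)"]
    by simp
  also have "\<dots> = (\<Sum>p\<in>set cs. (if p = (m,v) then Fx p else 0) +
       (if p = (m, D-v) then (if v \<noteq> D-v then (if sf m then 1 else -1) * Fx p else 0) else 0))"
    by (rule sum.cong) (auto simp: tau_def)
  also have "\<dots> = (if (m,v) \<in> set cs then Fx (m,v) else 0) +
       (if (m,D-v) \<in> set cs then (if v \<noteq> D - v then (if sf m then 1 else -1)*Fx(m,D-v) else 0) else 0)"
    by (simp add: sum.distrib)
  also have "\<dots> = Fx (m,v)"
  proof -
    define b0 where "b0 = (if sf m then kbar D else kk D)"
    have c1: "(m,v) \<in> set cs \<longleftrightarrow> v \<le> b0" using setcs m v bnd b0_def by auto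
    have c2: "(m,D-v) \<in> set cs \<longleftrightarrow> D - v \<le> b0" using setcs m v bnd b0_def by auto
    have z: "Fx (m,v) = 0" if "\<not> sf m" "v = D - v"
      using symF that by simp
    have sq: "(if sf m then 1 else -1) * ((if sf m then 1 else -1) * Fx (m,v)) = Fx (m,v)"
      by simp
    note af = arith_facts[OF D v]
    show ?thesis
    proof (cases "sf m")
      case True
      then have b: "b0 = kbar D" by (simp add: b0_def)
      show ?thesis
      proof (cases "v = D - v")
        case True then show ?thesis unfolding c1 c2 b using af(1) by simp
      next
        case False then show ?thesis unfolding c1 c2 b symF sq using af(2)[OF False] by auto
      qed
    next
      case False
      then have b: "b0 = kk D" by (simp add: b0_def)
      show ?thesis
      proof (cases "v = D - v")
        case True then show ?thesis unfolding c1 c2 b using af(4)[OF True] z[OF False True] by simp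
      next
        case F2: False then show ?thesis unfolding c1 c2 b symF sq using af(3)[OF F2] by auto
      qed
    qed
  qed
  finally show ?thesis .
qed


definition dec :: "nat \<Rightarrow> nat \<Rightarrow> nat \<times> nat" where
  "dec D j = (j div (D - 1), j mod (D - 1) + 1)"

definition enc :: "nat \<Rightarrow> nat \<times> nat \<Rightarrow> nat" where
  "enc D p = fst p * (D - 1) + (snd p - 1)"

definition rinfo :: "nat \<Rightarrow> nat \<Rightarrow> nat \<Rightarrow> (nat \<times> nat) \<times> bool" where
  "rinfo r D i = (if i < NN r D
     then (col_pairs r (kk D) (kbar D) ! i, odd (fst (col_pairs r (kk D) (kbar D) ! i)))
     else (col_pairs r (kbar D) (kk D) ! (i - NN r D), even (fst (col_pairs r (kbar D) (kk D) ! (i - NN r D)))))"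

definition Tm :: "nat \<Rightarrow> nat \<Rightarrow> real mat" where
  "Tm r D = mat (r * (D - 1)) (r * (D - 1)) (\<lambda>(i, j). tau D (fst (rinfo r D i)) (snd (rinfo r D i)) (dec D j))"

lemma dec_eq:
  assumes "D \<ge> 2" "1 \<le> snd p" "snd p \<le> D - 1"
  shows "dec D j = p \<longleftrightarrow> j = enc D p"
proof
  assume "dec D j = p"
  then show "j = enc D p" unfolding dec_def enc_def
    by (metis add_diff_cancel_right' div_mult_mod_eq fst_conv snd_conv)
next
  assume j: "j = enc D p"
  define q where "q = snd p - 1"
  have q: "q < D - 1" "snd p = q + 1" using assms unfolding q_def by linarith+
  have "enc D p = fst p * (D - 1) + q" unfolding enc_def q_def ..
  moreover have "(fst p * (D - 1) + q) div (D - 1) = fst p" "(fst p * (D - 1) + q) mod (D - 1) = q"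
    using q by simp_all
  ultimately show "dec D j = p" unfolding j dec_def using q
    by (simp add: prod_eq_iff)
qed

lemma dec_range:
  assumes "D \<ge> 2" "j < r * (D - 1)"
  shows "fst (dec D j) < r" "1 \<le> snd (dec D j)" "snd (dec D j) \<le> D - 1"
proof -
  have "D - 1 > 0" using assms by simp
  then show "fst (dec D j) < r" using assms unfolding dec_def
    by (simp add: div_less_iff_less_mult)
  show "1 \<le> snd (dec D j)" unfolding dec_def by simp
  have "j mod (D - 1) < D - 1" using \<open>D - 1 > 0\<close> by simp
  then show "snd (dec D j) \<le> D - 1" unfolding dec_def by simp
qed

lemma enc_lt:
  assumes "fst p < r" "1 \<le> snd p" "snd p \<le> D - 1"
  shows "enc D p < r * (D - 1)"
proof -
  have "enc D p < (fst p + 1) * (D - 1)" using assms unfolding enc_def by simp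
  also have "\<dots> \<le> r * (D - 1)" using assms by (intro mult_right_mono) auto
  finally show ?thesis .
qed

lemma lens:
  assumes "D \<ge> 3"
  shows "length (col_pairs r (kk D) (kbar D)) = NN r D"
    and "length (col_pairs r (kbar D) (kk D)) = r * (D - 1) - NN r D"
    and "NN r D \<le> r * (D - 1)"
  using len_arith[OF assms, of r] by (auto simp: length_col_pairs NN_def mult.commute)

lemma rinfo_valid:
  assumes D: "D \<ge> 3" and i: "i < r * (D - 1)"
  shows "fst (fst (rinfo r D i)) < r \<and> 1 \<le> snd (fst (rinfo r D i)) \<and>
         snd (fst (rinfo r D i)) \<le> (if snd (rinfo r D i) then kbar D else kk D)"
proof (cases "i < NN r D")
  case True
  then have "col_pairs r (kk D) (kbar D) ! i \<in> set (col_pairs r (kk D) (kbar D))"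
    using lens[OF D] by simp
  then show ?thesis using True unfolding rinfo_def set_col_pairs by (auto split: if_splits)
next
  case False
  then have "col_pairs r (kbar D) (kk D) ! (i - NN r D) \<in> set (col_pairs r (kbar D) (kk D))"
    using lens[OF D] i by simp
  then show ?thesis using False unfolding rinfo_def set_col_pairs by (auto split: if_splits)
qed

lemma Tm_carrier: "Tm r D \<in> carrier_mat (r * (D - 1)) (r * (D - 1))"
  unfolding Tm_def by simp

lemma Tm_row:
  assumes D: "D \<ge> 3" and i: "i < r * (D - 1)" and x: "x \<in> carrier_vec (r * (D - 1))"
    and pi: "rinfo r D i = (p, s)"
  shows "(Tm r D *\<^sub>v x) $ i = x $ (enc D p) +
     (if snd p \<noteq> D - snd p then (if s then 1 else -1) * x $ enc D (fst p, D - snd p) else 0)"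
proof -
  let ?n = "r * (D - 1)"
  have kb: "kk D \<le> kbar D" "kbar D \<le> D - 1" using arith_facts(6,7)[OF D, of 1] D by auto
  have pv: "fst p < r" "1 \<le> snd p" "snd p \<le> D - 1"
    using rinfo_valid[OF D i] kb pi by (auto split: if_splits)
  have p2v: "fst (fst p, D - snd p) < r" "1 \<le> snd (fst p, D - snd p)" "snd (fst p, D - snd p) \<le> D - 1"
    using pv D by auto
  have "(Tm r D *\<^sub>v x) $ i = (\<Sum>j\<in>{0..<?n}. tau D p s (dec D j) * x $ j)"
    using i x pi unfolding Tm_def by (simp add: scalar_prod_def)
  also have "\<dots> = (\<Sum>j\<in>{0..<?n}. (if j = enc D p then x $ j else 0) +
      (if j = enc D (fst p, D - snd p) then
         (if snd p \<noteq> D - snd p then (if s then 1 else -1) * x $ j else 0) else 0))"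
  proof (rule sum.cong[OF refl])
    fix j assume "j \<in> {0..<?n}"
    then have jr: "fst (dec D j) < r" "1 \<le> snd (dec D j)" "snd (dec D j) \<le> D - 1"
      using dec_range[of D j r] D by auto
    have e1: "p = dec D j \<longleftrightarrow> j = enc D p" using dec_eq[of D p j] pv D by auto
    have e2: "(p = (fst (dec D j), D - snd (dec D j)) \<and> snd (dec D j) \<noteq> D - snd (dec D j)) \<longleftrightarrow>
        (dec D j = (fst p, D - snd p) \<and> snd p \<noteq> D - snd p)"
      using jr pv by (auto simp: prod_eq_iff)
    have e3: "dec D j = (fst p, D - snd p) \<longleftrightarrow> j = enc D (fst p, D - snd p)"
      using dec_eq[of D "(fst p, D - snd p)" j] p2v D by auto
    show "tau D p s (dec D j) * x $ j = (if j = enc D p then x $ j else 0) +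
      (if j = enc D (fst p, D - snd p) then
         (if snd p \<noteq> D - snd p then (if s then 1 else -1) * x $ j else 0) else 0)"
      unfolding tau_def using e1 e2 e3 by (auto simp: algebra_simps)
  qed
  also have "\<dots> = x $ (enc D p) +
     (if snd p \<noteq> D - snd p then (if s then 1 else -1) * x $ enc D (fst p, D - snd p) else 0)"
    using enc_lt[OF pv] enc_lt[OF p2v] by (simp add: sum.distrib)
  finally show ?thesis .
qed


lemma row1:
  assumes D: "D \<ge> 3" and "m < r" "1 \<le> v" "v \<le> (if even m then kk D else kbar D)"
  shows "\<exists>i<NN r D. rinfo r D i = ((m,v), odd m)"
proof -
  have "(m,v) \<in> set (col_pairs r (kk D) (kbar D))" using assms by (simp add: set_col_pairs)
  then obtain i where i: "i < length (col_pairs r (kk D) (kbar D))" "col_pairs r (kk D) (kbar D) ! i = (m,v)"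
    by (auto simp: in_set_conv_nth)
  then show ?thesis using lens[OF D] by (intro exI[of _ i]) (auto simp: rinfo_def)
qed

lemma row2:
  assumes D: "D \<ge> 3" and "m < r" "1 \<le> v" "v \<le> (if even m then kbar D else kk D)"
  shows "\<exists>i. NN r D \<le> i \<and> i < r * (D - 1) \<and> rinfo r D i = ((m,v), even m)"
proof -
  have "(m,v) \<in> set (col_pairs r (kbar D) (kk D))" using assms by (simp add: set_col_pairs)
  then obtain i where i: "i < length (col_pairs r (kbar D) (kk D))" "col_pairs r (kbar D) (kk D) ! i = (m,v)"
    by (auto simp: in_set_conv_nth)
  then show ?thesis using lens[OF D] by (intro exI[of _ "NN r D + i"]) (auto simp: rinfo_def)
qed

lemma det_Tm:
  assumes D: "D \<ge> 3"
  shows "det (Tm r D) \<noteq> 0"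
proof
  let ?n = "r * (D - 1)"
  assume "det (Tm r D) = 0"
  then obtain x where x: "x \<in> carrier_vec ?n" "x \<noteq> 0\<^sub>v ?n" "Tm r D *\<^sub>v x = 0\<^sub>v ?n"
    using det_0_iff_vec_prod_zero[OF Tm_carrier] by blast
  have rowz: "x $ (enc D p) +
     (if snd p \<noteq> D - snd p then (if s then 1 else -1) * x $ enc D (fst p, D - snd p) else 0) = 0"
    if "i < ?n" "rinfo r D i = (p, s)" for i p s
    using Tm_row[OF D that(1) x(1) that(2)] x(3) that(1) by simp
  have kb: "kk D \<le> kbar D" "kbar D \<le> D - 1" using arith_facts(6,7)[OF D, of 1] D by auto
  have key: "x $ enc D (m,v) = 0 \<and> x $ enc D (m, D - v) = 0"
    if mv: "m < r" "1 \<le> v" "v \<le> kk D" for m v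
  proof -
    have vD: "v \<le> D - 1" using mv kb by simp
    have nv: "v \<noteq> D - v" using arith_facts(5)[OF D mv(2) vD] mv(3) by simp
    have b1: "v \<le> (if even m then kk D else kbar D)" and b2: "v \<le> (if even m then kbar D else kk D)"
      using mv kb by auto
    obtain i1 where i1: "i1 < NN r D" "rinfo r D i1 = ((m,v), odd m)"
      using row1[OF D mv(1,2) b1] by auto
    obtain i2 where i2: "i2 < ?n" "rinfo r D i2 = ((m,v), even m)"
      using row2[OF D mv(1,2) b2] by auto
    have i1n: "i1 < ?n" using i1 lens(3)[OF D, of r] by simp
    have "x $ enc D (m,v) + (if odd m then 1 else -1) * x $ enc D (m, D - v) = 0"
      using rowz[OF i1n i1(2)] nv by simp
    moreover have "x $ enc D (m,v) + (if even m then 1 else -1) * x $ enc D (m, D - v) = 0"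
      using rowz[OF i2] nv by simp
    ultimately show ?thesis by (cases "even m") auto
  qed
  have mid: "x $ enc D (m,v) = 0" if mv: "m < r" "1 \<le> v" "v = D - v" for m v
  proof -
    have vD: "v \<le> D - 1" using mv D by linarith
    have vk: "v \<le> kbar D" using arith_facts(1)[OF D mv(2) vD] mv(3) by simp
    obtain i where i: "i < ?n" "rinfo r D i = ((m,v), True)"
    proof (cases "even m")
      case True
      then show ?thesis using row2[OF D mv(1,2)] vk that by auto
    next
      case False
      then have "v \<le> (if even m then kk D else kbar D)" using vk by simp
      then obtain i where "i < NN r D" "rinfo r D i = ((m,v), odd m)" using row1[OF D mv(1,2)] by blast
      moreover have "i < NN r D \<Longrightarrow> i < ?n" using lens(3)[OF D, of r] by simp
      ultimately show ?thesis using that False by simp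
    qed
    show ?thesis using rowz[OF i] mv(3) by simp
  qed
  have "x = 0\<^sub>v ?n"
  proof (rule eq_vecI)
    fix j assume "j < dim_vec (0\<^sub>v ?n :: real vec)"
    then have j: "j < ?n" by simp
    obtain m v where mv: "dec D j = (m,v)" by (cases "dec D j")
    have r: "m < r" "1 \<le> v" "v \<le> D - 1" using dec_range[of D j r] j D mv by auto
    have je: "j = enc D (m,v)" using dec_eq[of D "(m,v)" j] r D mv by auto
    have "x $ j = 0"
    proof (cases "v \<le> kk D")
      case True then show ?thesis using key[OF r(1,2) True] je by simp
    next
      case False
      show ?thesis
      proof (cases "D - v \<le> kk D")
        case True
        have "1 \<le> D - v" using r by linarith
        then have "x $ enc D (m, D - (D - v)) = 0" using key[OF r(1) _ True] by blast
        moreover have "D - (D - v) = v" using r by linarith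
        ultimately show ?thesis using je by simp
      next
        case F2: False
        have "v = D - v" using arith_facts(8)[OF D r(2,3) False F2] .
        then show ?thesis using mid[OF r(1,2)] je by simp
      qed
    qed
    then show "x $ j = 0\<^sub>v ?n $ j" using j by simp
  next
    show "dim_vec x = dim_vec (0\<^sub>v ?n :: real vec)" using x(1) by simp
  qed
  then show False using x(2) by simp
qed


lemma factor:
  assumes D: "D \<ge> 3"
    and mono: "\<forall>s t. 1 \<le> s \<and> s < t \<and> t \<le> r * (D - 1) \<longrightarrow> \<alpha> s < \<alpha> t"
    and a1: "\<alpha> 1 \<ge> 2"
    and oddA: "\<forall>t. 1 \<le> t \<and> t \<le> NN r D \<longrightarrow> odd (\<alpha> t)"
    and evenA: "\<forall>t. NN r D + 1 \<le> t \<and> t \<le> r * (D - 1) \<longrightarrow> even (\<alpha> t)"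
  shows "Delta_full r D \<alpha> = det (Tm r D) * Delta' r D \<alpha> * Delta'' r D \<alpha>"
proof -
  define n where "n = r * (D - 1)"
  define N where "N = NN r D"
  define cs1 where "cs1 = col_pairs r (kk D) (kbar D)"
  define cs2 where "cs2 = col_pairs r (kbar D) (kk D)"
  define E where "E = (\<lambda>a (p :: nat \<times> nat). delta_entry D a (fst p) (snd p))"
  define A1 where "A1 = mat N N (\<lambda>(i, j). delta_entry D (\<alpha> (i + 1)) (fst (cs1 ! j)) (snd (cs1 ! j)))"
  define A2 where "A2 = mat (n - N) (n - N) (\<lambda>(i, j). delta_entry D (\<alpha> (N + i + 1)) (fst (cs2 ! j)) (snd (cs2 ! j)))"
  define B where "B = four_block_mat A1 (0\<^sub>m N (n - N)) (0\<^sub>m (n - N) N) A2"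
  define Mf where "Mf = mat n n (\<lambda>(i, j). delta_entry D (\<alpha> (i + 1)) (j div (D - 1)) (j mod (D - 1) + 1))"
  define T where "T = Tm r D"
  have Nn: "N \<le> n" using lens(3)[OF D, of r] unfolding N_def n_def .
  have l1: "length cs1 = N" using lens(1)[OF D, of r] unfolding N_def cs1_def .
  have l2: "length cs2 = n - N" using lens(2)[OF D, of r] unfolding N_def cs2_def n_def .
  have ge2: "\<alpha> (t + 1) \<ge> 2" if "t < n" for t
  proof (cases "t = 0")
    case True then show ?thesis using a1 by simp
  next
    case False then have "\<alpha> 1 < \<alpha> (t + 1)" using mono that unfolding n_def by auto
    then show ?thesis using a1 by simp
  qed
  have A1c: "A1 \<in> carrier_mat N N" unfolding A1_def by simp
  have A2c: "A2 \<in> carrier_mat (n - N) (n - N)" unfolding A2_def by simp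
  have Bc: "B \<in> carrier_mat n n" unfolding B_def using A1c A2c Nn
    using four_block_carrier_mat[OF A1c A2c] by simp
  have Tc: "T \<in> carrier_mat n n" unfolding T_def n_def by (rule Tm_carrier)
  have Bt: "B $$ (t, i) = (if t < N then (if i < N then E (\<alpha> (t + 1)) (cs1 ! i) else 0)
      else (if i < N then 0 else E (\<alpha> (t + 1)) (cs2 ! (i - N))))"
    if "t < n" "i < n" for t i
    using that A1c A2c Nn unfolding B_def A1_def A2_def E_def by auto
  have Tt: "T $$ (i, j) = tau D (fst (rinfo r D i)) (snd (rinfo r D i)) (dec D j)"
    if "i < n" "j < n" for i j
    using that unfolding T_def Tm_def n_def by simp
  have ri1: "rinfo r D i = (cs1 ! i, odd (fst (cs1 ! i)))" if "i < N" for i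
    using that unfolding rinfo_def cs1_def N_def by simp
  have ri2: "rinfo r D i = (cs2 ! (i - N), even (fst (cs2 ! (i - N))))" if "\<not> i < N" for i
    using that unfolding rinfo_def cs2_def N_def by simp
  have prod: "Mf = B * T"
  proof (rule eq_matI)
    fix t j assume "t < dim_row (B * T)" "j < dim_col (B * T)"
    then have t: "t < n" and j: "j < n" using Bc Tc by auto
    obtain m v where mv: "dec D j = (m, v)" by (cases "dec D j")
    have r: "m < r" "1 \<le> v" "v \<le> D - 1" using dec_range[of D j r] j D mv unfolding n_def by auto
    have Mft: "Mf $$ (t, j) = E (\<alpha> (t + 1)) (m, v)"
      using t j mv unfolding Mf_def E_def dec_def by auto
    have "(B * T) $$ (t, j) = (\<Sum>i\<in>{0..<n}. B $$ (t, i) * T $$ (i, j))"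
      using t j Bc Tc by (simp add: scalar_prod_def)
    also have "\<dots> = (\<Sum>i\<in>{0..<N}. B $$ (t, i) * T $$ (i, j)) + (\<Sum>i\<in>{N..<n}. B $$ (t, i) * T $$ (i, j))"
      using Nn by (simp add: sum.atLeastLessThan_concat)
    also have "\<dots> = E (\<alpha> (t + 1)) (m, v)"
    proof (cases "t < N")
      case True
      have z: "(\<Sum>i\<in>{N..<n}. B $$ (t, i) * T $$ (i, j)) = 0"
        using Bt t True by (intro sum.neutral) auto
      have "(\<Sum>i\<in>{0..<N}. B $$ (t, i) * T $$ (i, j))
          = (\<Sum>i<length cs1. E (\<alpha> (t + 1)) (cs1 ! i) * tau D (cs1 ! i) (odd (fst (cs1 ! i))) (m, v))"
        unfolding l1 atLeast0LessThan
        by (rule sum.cong[OF refl]) (use Bt Tt ri1 t j True Nn mv in auto)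
      also have "\<dots> = E (\<alpha> (t + 1)) (m, v)"
      proof (rule core[OF D _ _ r])
        show "distinct cs1" unfolding cs1_def by (rule distinct_col_pairs)
        show "set cs1 = {(m,v). m<r \<and> 1\<le>v \<and> v \<le> (if even m then kk D else kbar D)}"
          unfolding cs1_def by (rule set_col_pairs)
        show "(if even m then kk D else kbar D) = (if odd m then kbar D else kk D)" by simp
        have oa: "odd (\<alpha> (t + 1))" using oddA True unfolding N_def by auto
        have "E (\<alpha> (t + 1)) (m, D - v) = (if even (\<alpha> (t + 1) + int m) then 1 else -1) * E (\<alpha> (t + 1)) (m, v)"
          unfolding E_def using entry_sym[of "\<alpha> (t + 1)" m v D] ge2[OF t] r D by simp
        then show "E (\<alpha> (t + 1)) (m, D - v) = (if odd m then 1 else -1) * E (\<alpha> (t + 1)) (m, v)"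
          using oa by simp
      qed
      finally show ?thesis using z by simp
    next
      case False
      have z: "(\<Sum>i\<in>{0..<N}. B $$ (t, i) * T $$ (i, j)) = 0"
        using Bt t False Nn by (intro sum.neutral) auto
      have "(\<Sum>i\<in>{N..<n}. B $$ (t, i) * T $$ (i, j)) = (\<Sum>i\<in>{0..<n - N}. B $$ (t, N + i) * T $$ (N + i, j))"
        by (simp add: sum.atLeastLessThan_shift_0[of _ N n] comp_def)
      also have "\<dots> = (\<Sum>i<length cs2. E (\<alpha> (t + 1)) (cs2 ! i) * tau D (cs2 ! i) (even (fst (cs2 ! i))) (m, v))"
        unfolding l2 atLeast0LessThan
        by (rule sum.cong[OF refl]) (use Bt Tt ri2 t j False Nn mv in auto)
      also have "\<dots> = E (\<alpha> (t + 1)) (m, v)"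
      proof (rule core[OF D _ _ r])
        show "distinct cs2" unfolding cs2_def by (rule distinct_col_pairs)
        show "set cs2 = {(m,v). m<r \<and> 1\<le>v \<and> v \<le> (if even m then kbar D else kk D)}"
          unfolding cs2_def by (rule set_col_pairs)
        show "(if even m then kbar D else kk D) = (if even m then kbar D else kk D)" by simp
        have ea: "even (\<alpha> (t + 1))" using evenA False t unfolding N_def n_def by auto
        have "E (\<alpha> (t + 1)) (m, D - v) = (if even (\<alpha> (t + 1) + int m) then 1 else -1) * E (\<alpha> (t + 1)) (m, v)"
          unfolding E_def using entry_sym[of "\<alpha> (t + 1)" m v D] ge2[OF t] r D by simp
        then show "E (\<alpha> (t + 1)) (m, D - v) = (if even m then 1 else -1) * E (\<alpha> (t + 1)) (m, v)"
          using ea by simp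
      qed
      finally show ?thesis using z by simp
    qed
    finally show "Mf $$ (t, j) = (B * T) $$ (t, j)" using Mft by simp
  next
    show "dim_row Mf = dim_row (B * T)" "dim_col Mf = dim_col (B * T)"
      using Bc Tc unfolding Mf_def by auto
  qed
  have "Delta_full r D \<alpha> = det Mf" unfolding Delta_full_def Mf_def n_def ..
  also have "\<dots> = det B * det T" unfolding prod by (rule det_mult[OF Bc Tc])
  also have "det B = det A1 * det A2" unfolding B_def
    by (rule det_four_block_mat_lower_left_zero[OF A1c _ refl A2c]) simp
  also have "det A1 = Delta' r D \<alpha>" unfolding Delta'_def Let_def A1_def cs1_def N_def ..
  also have "det A2 = Delta'' r D \<alpha>" unfolding Delta''_def Let_def A2_def cs2_def N_def n_def ..
  finally show ?thesis unfolding T_def by simp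
qed

theorem proposition3p4:
  fixes r D :: nat
  assumes "r \<ge> 1" and "D \<ge> 3"
  shows "\<exists>C::real. C \<noteq> 0 \<and>
    (\<forall>\<alpha> :: nat \<Rightarrow> int.
       (\<forall>s t. 1 \<le> s \<and> s < t \<and> t \<le> r * (D - 1) \<longrightarrow> \<alpha> s < \<alpha> t) \<and>
       \<alpha> 1 \<ge> 2 \<and>
       (\<forall>t. 1 \<le> t \<and> t \<le> NN r D \<longrightarrow> odd (\<alpha> t)) \<and>
       (\<forall>t. NN r D + 1 \<le> t \<and> t \<le> r * (D - 1) \<longrightarrow> even (\<alpha> t))
       \<longrightarrow> Delta_full r D \<alpha> = C * Delta' r D \<alpha> * Delta'' r D \<alpha> \<and>
           (Delta' r D \<alpha> \<noteq> 0 \<and> Delta'' r D \<alpha> \<noteq> 0 \<longrightarrow> Delta_full r D \<alpha> \<noteq> 0))"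
proof (intro exI[of _ "det (Tm r D)"] conjI allI impI)
  show "det (Tm r D) \<noteq> 0" using det_Tm[OF assms(2)] .
  fix \<alpha> :: "nat \<Rightarrow> int"
  assume h: "(\<forall>s t. 1 \<le> s \<and> s < t \<and> t \<le> r * (D - 1) \<longrightarrow> \<alpha> s < \<alpha> t) \<and>
       \<alpha> 1 \<ge> 2 \<and>
       (\<forall>t. 1 \<le> t \<and> t \<le> NN r D \<longrightarrow> odd (\<alpha> t)) \<and>
       (\<forall>t. NN r D + 1 \<le> t \<and> t \<le> r * (D - 1) \<longrightarrow> even (\<alpha> t))"
  then show eq: "Delta_full r D \<alpha> = det (Tm r D) * Delta' r D \<alpha> * Delta'' r D \<alpha>"
    using factor[OF assms(2)] by blast
  assume "Delta' r D \<alpha> \<noteq> 0 \<and> Delta'' r D \<alpha> \<noteq> 0"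
  then show "Delta_full r D \<alpha> \<noteq> 0" using eq det_Tm[OF assms(2)] by simp
qed

end
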